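(* For every $n\ge 2$, the relation algebra $A_n$ is representable over $(\mathbb{Z}/2\mathbb{Z})^{3k+1}$ (a set of $2^{3k+1}$ points) for all sufficiently large $k\in\omega$. In particular, for $n\ge 14$ it suffices to take $k=n$, so $A_n$ has a representation over a set of $2^{3n+1}$ points for all $n\ge 14$.
   Context: For $n\ge 1$, $A_n$ denotes the finite integral symmetric relation algebra with atoms $1'$ (identity), $r$, $b_1,\dots,b_n$, all symmetric, in which a diversity cycle $xyz$ (with $x,y,z$ diversity atoms) is mandatory (i.e. $x;y\ge z$) if and only if it involves the atom $r$, and is forbidden (i.e. $x;y\cdot z=0$) otherwise. A representation of such a (simple) relation algebra over a set $U$ is an embedding into the full relation algebra $\langle \mathcal P(U\times U),\cup,{}^c,\circ,{}^{-1},\mathrm{Id}_U\rangle$. *)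

theory Defs
  imports Main
begin

datatype atom = IdA | RA | BA nat

definition atoms :: "nat \<Rightarrow> atom set" where
  "atoms n = {IdA, RA} \<union> BA ` {1..n}"

text \<open>Cycle rule for atoms x, y, z: z is below x;y.
  All atoms are symmetric. Identity: 1';y = y, x;1' = x, and x;y contains 1' iff x = y.
  A diversity cycle is allowed iff it involves r.\<close>
definition cyc :: "atom \<Rightarrow> atom \<Rightarrow> atom \<Rightarrow> bool" where
  "cyc x y z =
    (if x = IdA then z = y
     else if y = IdA then z = x
     else if z = IdA then x = y
     else (x = RA \<or> y = RA \<or> z = RA))"

definition A_comp :: "nat \<Rightarrow> atom set \<Rightarrow> atom set \<Rightarrow> atom set" where
  "A_comp n X Y = {z \<in> atoms n. \<exists>x\<in>X. \<exists>y\<in>Y. cyc x y z}"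

definition A_compl :: "nat \<Rightarrow> atom set \<Rightarrow> atom set" where
  "A_compl n X = atoms n - X"

definition A_conv :: "atom set \<Rightarrow> atom set" where
  "A_conv X = X"  \<comment> \<open>all atoms are symmetric\<close>

definition A_ident :: "atom set" where
  "A_ident = {IdA}"

definition representation :: "nat \<Rightarrow> 'u set \<Rightarrow> (atom set \<Rightarrow> ('u \<times> 'u) set) \<Rightarrow> bool" where
  "representation n U h \<longleftrightarrow>
     inj_on h (Pow (atoms n)) \<and>
     (\<forall>X\<in>Pow (atoms n). \<forall>Y\<in>Pow (atoms n). h (X \<union> Y) = h X \<union> h Y) \<and>
     (\<forall>X\<in>Pow (atoms n). h (A_compl n X) = (U \<times> U) - h X) \<and>
     (\<forall>X\<in>Pow (atoms n). \<forall>Y\<in>Pow (atoms n). h (A_comp n X Y) = h X O h Y) \<and>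
     (\<forall>X\<in>Pow (atoms n). h (A_conv X) = (h X)\<inverse>) \<and>
     h A_ident = Id_on U"

definition representable_over :: "nat \<Rightarrow> 'u set \<Rightarrow> bool" where
  "representable_over n U \<longleftrightarrow> (\<exists>h. representation n U h)"

text \<open>(Z/2Z)^m as a set: boolean vectors of length m.\<close>
definition Z2_pow :: "nat \<Rightarrow> bool list set" where
  "Z2_pow m = {v. length v = m}"

end

theory Submission
  imports Defs "HOL-Library.FuncSet" Complex_Main
begin

definition sd :: "'a set \<Rightarrow> 'a set \<Rightarrow> 'a set" where
  "sd A B = (A - B) \<union> (B - A)"

lemma sd_sub: "A \<subseteq> M \<Longrightarrow> B \<subseteq> M \<Longrightarrow> sd A B \<subseteq> M"
  unfolding sd_def by blast

lemma sd_comm: "sd A B = sd B A" unfolding sd_def by blast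
lemma sd_empty_iff: "sd A B = {} \<longleftrightarrow> A = B" unfolding sd_def by blast
lemma sd_empty_left[simp]: "sd {} A = A" unfolding sd_def by blast
lemma sd_self[simp]: "sd A A = {}" unfolding sd_def by blast
lemma sd_cancel: "sd A (sd A B) = B" unfolding sd_def by blast
lemma sd_cancel2: "sd (sd A B) B = A" unfolding sd_def by blast
lemma sd_tri: "sd (sd a b) (sd a c) = sd b c" unfolding sd_def by blast

definition psi :: "bool list \<Rightarrow> nat set" where
  "psi xs = {i. i < length xs \<and> xs ! i}"

lemma psi_sub: "xs \<in> Z2_pow m \<Longrightarrow> psi xs \<subseteq> {..<m}"
  unfolding psi_def Z2_pow_def by auto

lemma psi_inj: "inj_on psi (Z2_pow m)"
proof (rule inj_onI)
  fix x y assume x: "x \<in> Z2_pow m" and y: "y \<in> Z2_pow m" and e: "psi x = psi y"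
  have lx: "length x = m" and ly: "length y = m" using x y unfolding Z2_pow_def by auto
  show "x = y"
  proof (rule nth_equalityI)
    show "length x = length y" using lx ly by simp
    fix i assume i: "i < length x"
    have "(i \<in> psi x) = (i \<in> psi y)" using e by simp
    then show "x ! i = y ! i" using i lx ly unfolding psi_def by auto
  qed
qed

lemma psi_surj: "A \<subseteq> {..<m} \<Longrightarrow> \<exists>xs\<in>Z2_pow m. psi xs = A"
proof -
  assume A: "A \<subseteq> {..<m}"
  let ?xs = "map (\<lambda>i. i \<in> A) [0..<m]"
  have "?xs \<in> Z2_pow m" unfolding Z2_pow_def by simp
  moreover have "psi ?xs = A" unfolding psi_def using A by auto
  ultimately show ?thesis by blast
qed

lemma cayley_rep:
  fixes col :: "nat set \<Rightarrow> atom"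
  assumes col_range: "\<And>A. A \<subseteq> {..<m} \<Longrightarrow> col A \<in> atoms n"
    and col_id: "\<And>A. A \<subseteq> {..<m} \<Longrightarrow> col A = IdA \<longleftrightarrow> A = {}"
    and col_surj: "\<And>a. a \<in> atoms n \<Longrightarrow> \<exists>A\<subseteq>{..<m}. col A = a"
    and cyc_law: "\<And>Z x y. Z \<subseteq> {..<m} \<Longrightarrow> x \<in> atoms n \<Longrightarrow> y \<in> atoms n \<Longrightarrow>
         (\<exists>A\<subseteq>{..<m}. col A = x \<and> col (sd A Z) = y) \<longleftrightarrow> cyc x y (col Z)"
  shows "representable_over n (Z2_pow m)"
proof -
  let ?U = "Z2_pow m"
  define h where "h X = {(u,v). u \<in> ?U \<and> v \<in> ?U \<and> col (sd (psi u) (psi v)) \<in> X}" for X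
  have sdU: "sd (psi u) (psi v) \<subseteq> {..<m}" if "u \<in> ?U" "v \<in> ?U" for u v
    using sd_sub[OF psi_sub[OF that(1)] psi_sub[OF that(2)]] .
  obtain e where e: "e \<in> ?U" "psi e = {}" using psi_surj[of "{}" m] by auto
  have inj: "inj_on h (Pow (atoms n))"
  proof (rule inj_onI)
    fix X Y assume X: "X \<in> Pow (atoms n)" and Y: "Y \<in> Pow (atoms n)" and hXY: "h X = h Y"
    have *: "X \<subseteq> Y" if X: "X \<in> Pow (atoms n)" and hXY: "h X = h Y" for X Y
    proof
      fix a assume a: "a \<in> X"
      then obtain A where A: "A \<subseteq> {..<m}" "col A = a" using col_surj X by blast
      obtain v where v: "v \<in> ?U" "psi v = A" using psi_surj[OF A(1)] by blast
      have "(e, v) \<in> h X" unfolding h_def using e v A a by auto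
      then have "(e, v) \<in> h Y" using hXY by simp
      then show "a \<in> Y" unfolding h_def using e v A by auto
    qed
    show "X = Y" using *[OF X hXY] *[OF Y hXY[symmetric]] by blast
  qed
  have un: "h (X \<union> Y) = h X \<union> h Y" for X Y unfolding h_def by auto
  have compl: "h (A_compl n X) = (?U \<times> ?U) - h X" for X
    unfolding h_def A_compl_def using col_range sdU by auto
  have conv: "h (A_conv X) = (h X)\<inverse>" for X
    unfolding h_def A_conv_def by (auto simp: sd_comm)
  have ident: "h A_ident = Id_on ?U"
  proof -
    have "col (sd (psi u) (psi v)) = IdA \<longleftrightarrow> u = v" if "u \<in> ?U" "v \<in> ?U" for u v
      using col_id[OF sdU[OF that]] sd_empty_iff[of "psi u" "psi v"] inj_onD[OF psi_inj _ that] by auto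
    then show ?thesis unfolding h_def A_ident_def Id_on_def by auto
  qed
  have comp: "h (A_comp n X Y) = h X O h Y" if X: "X \<subseteq> atoms n" and Y: "Y \<subseteq> atoms n" for X Y
  proof (rule set_eqI, clarify)
    fix u w
    show "(u, w) \<in> h (A_comp n X Y) \<longleftrightarrow> (u, w) \<in> h X O h Y"
    proof (cases "u \<in> ?U \<and> w \<in> ?U")
      case False then show ?thesis unfolding h_def by auto
    next
      case True
      then have u: "u \<in> ?U" and w: "w \<in> ?U" by auto
      let ?Z = "sd (psi u) (psi w)"
      have Z: "?Z \<subseteq> {..<m}" using sdU[OF u w] .
      have "(u, w) \<in> h (A_comp n X Y) \<longleftrightarrow> (\<exists>x\<in>X. \<exists>y\<in>Y. cyc x y (col ?Z))"
        unfolding h_def A_comp_def using u w col_range[OF Z] by auto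
      also have "\<dots> \<longleftrightarrow> (\<exists>x\<in>X. \<exists>y\<in>Y. \<exists>A\<subseteq>{..<m}. col A = x \<and> col (sd A ?Z) = y)"
      proof -
        have "cyc x y (col ?Z) \<longleftrightarrow> (\<exists>A\<subseteq>{..<m}. col A = x \<and> col (sd A ?Z) = y)" if "x \<in> X" "y \<in> Y" for x y
          using cyc_law[OF Z, of x y] that X Y by blast
        then show ?thesis by (meson bex_cong)
      qed
      also have "\<dots> \<longleftrightarrow> (\<exists>A\<subseteq>{..<m}. col A \<in> X \<and> col (sd A ?Z) \<in> Y)" by blast
      also have "\<dots> \<longleftrightarrow> (\<exists>v\<in>?U. col (sd (psi u) (psi v)) \<in> X \<and> col (sd (psi v) (psi w)) \<in> Y)"
      proof
        assume "\<exists>A\<subseteq>{..<m}. col A \<in> X \<and> col (sd A ?Z) \<in> Y"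
        then obtain A where A: "A \<subseteq> {..<m}" "col A \<in> X" "col (sd A ?Z) \<in> Y" by blast
        obtain v where v: "v \<in> ?U" "psi v = sd (psi u) A"
          using psi_surj[OF sd_sub[OF psi_sub[OF u] A(1)]] by blast
        have "sd (psi u) (psi v) = A" using v by (simp add: sd_cancel)
        moreover have "sd (psi v) (psi w) = sd A ?Z" using v sd_tri[of "psi u" "psi v" "psi w"] \<open>sd (psi u) (psi v) = A\<close>
          by simp
        ultimately show "\<exists>v\<in>?U. col (sd (psi u) (psi v)) \<in> X \<and> col (sd (psi v) (psi w)) \<in> Y"
          using v(1) A(2,3) by (intro bexI[of _ v]) auto
      next
        assume "\<exists>v\<in>?U. col (sd (psi u) (psi v)) \<in> X \<and> col (sd (psi v) (psi w)) \<in> Y"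
        then obtain v where v: "v \<in> ?U" "col (sd (psi u) (psi v)) \<in> X" "col (sd (psi v) (psi w)) \<in> Y" by blast
        show "\<exists>A\<subseteq>{..<m}. col A \<in> X \<and> col (sd A ?Z) \<in> Y"
          apply (rule exI[of _ "sd (psi u) (psi v)"])
          using sdU[OF u v(1)] v sd_tri[of "psi u" "psi v" "psi w"] by simp
      qed
      also have "\<dots> \<longleftrightarrow> (u, w) \<in> h X O h Y" unfolding h_def using u w by auto
      finally show ?thesis .
    qed
  qed
  have "Defs.representation n ?U h"
    unfolding Defs.representation_def using inj un compl comp conv ident by auto
  then show ?thesis unfolding representable_over_def by blast
qed



definition Hv :: "nat \<Rightarrow> nat set set" where
  "Hv k = {A. A \<subseteq> {..<3*k+1} \<and> 2*k+1 \<le> card A}"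
definition Lt :: "nat \<Rightarrow> nat set set" where
  "Lt k = {A. A \<subseteq> {..<3*k+1} \<and> A \<noteq> {} \<and> card A \<le> 2*k}"
definition colf :: "nat \<Rightarrow> (nat set \<Rightarrow> nat) \<Rightarrow> nat set \<Rightarrow> atom" where
  "colf k f A = (if A = {} then IdA else if card A \<le> 2*k then RA else BA (f A))"

lemma fin_sub: "A \<subseteq> {..<(m::nat)} \<Longrightarrow> finite A"
  using finite_subset by blast

lemma card_sub_le: "A \<subseteq> {..<(m::nat)} \<Longrightarrow> card A \<le> m"
  using card_mono[of "{..<m}" A] by simp

lemma SF: assumes "A \<in> Hv k" "B \<in> Hv k" shows "card (sd A B) \<le> 2*k"
proof -
  have A: "A \<subseteq> {..<3*k+1}" "2*k+1 \<le> card A" and B: "B \<subseteq> {..<3*k+1}" "2*k+1 \<le> card B"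
    using assms unfolding Hv_def by auto
  have fA: "finite A" and fB: "finite B" using A B fin_sub by auto
  have e: "sd A B = (A \<union> B) - (A \<inter> B)" unfolding sd_def by blast
  have c1: "card (sd A B) = card (A \<union> B) - card (A \<inter> B)"
    unfolding e by (rule card_Diff_subset) (use fA fB in auto)
  have c2: "card (A \<union> B) + card (A \<inter> B) = card A + card B" using card_Un_Int[OF fA fB] by simp
  have c3: "card (A \<union> B) \<le> 3*k+1" using card_sub_le[of "A \<union> B" "3*k+1"] A B by auto
  show ?thesis using c1 c2 c3 A B by linarith
qed

lemma sub_cases: "A \<subseteq> {..<3*k+1} \<Longrightarrow> A = {} \<or> A \<in> Lt k \<or> A \<in> Hv k"
  unfolding Lt_def Hv_def by auto

lemma Lt_Hv_disj: "A \<in> Lt k \<Longrightarrow> A \<notin> Hv k"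
  unfolding Lt_def Hv_def by auto

lemma RR:
  assumes k: "1 \<le> k" and Z: "Z \<subseteq> {..<3*k+1}" "Z \<noteq> {}"
  shows "\<exists>A. A \<in> Lt k \<and> sd A Z \<in> Lt k"
proof -
  have fZ: "finite Z" using Z fin_sub by auto
  have cZ: "card Z \<le> 3*k+1" using card_sub_le Z by auto
  have c0: "card Z \<ge> 1" using Z fZ by (simp add: Suc_le_eq card_gt_0_iff)
  consider "card Z = 1" | "2 \<le> card Z \<and> card Z \<le> 2*k+1" | "2*k+2 \<le> card Z" using c0 by linarith
  then show ?thesis
  proof cases
    case 1
    then obtain z where z: "Z = {z}" using card_1_singletonE by blast
    have zM: "z < 3*k+1" using z Z by auto
    define t where "t = (if z = 0 then 1 else 0::nat)"
    have t: "t \<noteq> z" "t < 3*k+1" using k unfolding t_def by auto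
    have e: "sd {t} Z = {t, z}" using z t unfolding sd_def by auto
    have c2: "card {t, z} = 2" using t by simp
    have k2: "2 \<le> 2*k" using k by simp
    have "card (sd {t} Z) \<le> 2*k" using k2 e c2 by simp
    moreover have "sd {t} Z \<subseteq> {..<3*k+1}" using t zM e by auto
    moreover have "sd {t} Z \<noteq> {}" using e by auto
    ultimately have "sd {t} Z \<in> Lt k" unfolding Lt_def by blast
    moreover have "{t} \<in> Lt k" unfolding Lt_def using t k by auto
    ultimately show ?thesis by blast
  next
    case 2
    then obtain z where z: "z \<in> Z" using Z by blast
    have e: "sd {z} Z = Z - {z}" using z unfolding sd_def by auto
    have c: "card (Z - {z}) = card Z - 1" using z fZ by simp
    have "card (Z - {z}) \<le> 2*k" using c 2 by linarith
    moreover have "Z - {z} \<noteq> {}"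
    proof
      assume h: "Z - {z} = {}"
      have "card (Z - {z}) = 0" unfolding h by simp
      then show False using c 2 by linarith
    qed
    moreover have "Z - {z} \<subseteq> {..<3*k+1}" using Z by auto
    ultimately have "sd {z} Z \<in> Lt k" unfolding Lt_def e by blast
    moreover have "{z} \<in> Lt k" unfolding Lt_def using z Z k by auto
    ultimately show ?thesis by blast
  next
    case 3
    have "k + 1 \<le> card Z" using 3 by linarith
    then obtain A where A: "A \<subseteq> Z" "card A = k+1"
      using obtain_subset_with_card_n[of "k+1" Z] by metis
    have fA: "finite A" using A fZ finite_subset by blast
    have e: "sd A Z = Z - A" using A unfolding sd_def by auto
    have c: "card (Z - A) = card Z - (k+1)" using A fA card_Diff_subset[OF fA A(1)] by simp
    have "card (Z - A) \<le> 2*k" using c cZ by linarith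
    moreover have "Z - A \<noteq> {}"
    proof
      assume h: "Z - A = {}"
      have "card (Z - A) = 0" unfolding h by simp
      then show False using c 3 by linarith
    qed
    moreover have "Z - A \<subseteq> {..<3*k+1}" using Z by auto
    ultimately have "sd A Z \<in> Lt k" unfolding Lt_def e by blast
    moreover have "A \<noteq> {}" using A(2) by auto
    moreover have "A \<subseteq> {..<3*k+1}" using A Z by auto
    moreover have "card A \<le> 2*k" using A(2) k by simp
    ultimately show ?thesis unfolding Lt_def by blast
  qed
qed

lemma main_rep:
  fixes f :: "nat set \<Rightarrow> nat"
  assumes k: "1 \<le> k" and n: "1 \<le> n"
    and fR: "\<And>A. A \<in> Hv k \<Longrightarrow> f A \<in> {1..n}"
    and P1: "\<And>Z i j. Z \<in> Lt k \<Longrightarrow> i \<in> {1..n} \<Longrightarrow> j \<in> {1..n} \<Longrightarrow>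
              \<exists>A. A \<in> Hv k \<and> sd A Z \<in> Hv k \<and> f A = i \<and> f (sd A Z) = j"
    and P2: "\<And>Z j. Z \<in> Lt k \<Longrightarrow> j \<in> {1..n} \<Longrightarrow> \<exists>W. W \<in> Hv k \<and> f W = j \<and> sd W Z \<in> Lt k"
  shows "representable_over n (Z2_pow (3*k+1))"
proof (rule cayley_rep[where col = "colf k f"])
  let ?M = "{..<3*k+1}"
  have Lt0: "{0} \<in> Lt k" unfolding Lt_def using k by auto
  have cR: "colf k f A = RA \<longleftrightarrow> A \<in> Lt k" if "A \<subseteq> ?M" for A
    using that unfolding colf_def Lt_def by auto
  have cB: "colf k f A = BA i \<longleftrightarrow> A \<in> Hv k \<and> f A = i" if "A \<subseteq> ?M" for A i
    using that unfolding colf_def Hv_def by auto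
  have cI: "colf k f A = IdA \<longleftrightarrow> A = {}" for A
    unfolding colf_def by auto
  show "colf k f A \<in> atoms n" if AM: "A \<subseteq> ?M" for A
  proof -
    consider "A = {}" | "A \<in> Lt k" | "A \<in> Hv k" using sub_cases[OF AM] by blast
    then show ?thesis
    proof cases
      case 3
      then have "colf k f A = BA (f A)" using cB[OF AM] by blast
      then show ?thesis using fR[OF 3] unfolding atoms_def by auto
    qed (auto simp: atoms_def cI cR[OF AM])
  qed
  show "colf k f A = IdA \<longleftrightarrow> A = {}" if "A \<subseteq> ?M" for A using cI .
  have surjB: "\<exists>A\<subseteq>?M. colf k f A = BA i" if i: "i \<in> {1..n}" for i
  proof -
    obtain A where "A \<in> Hv k" "f A = i" using P1[OF Lt0 i i] by blast
    moreover then have "A \<subseteq> ?M" unfolding Hv_def by auto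
    ultimately show ?thesis using cB by blast
  qed
  show "\<exists>A\<subseteq>?M. colf k f A = a" if aa: "a \<in> atoms n" for a
  proof -
    consider "a = IdA" | "a = RA" | i where "i \<in> {1..n}" "a = BA i" using aa unfolding atoms_def by blast
    then show ?thesis
    proof cases
      case 1 then show ?thesis using cI by (intro exI[of _ "{}"]) auto
    next
      case 2 then show ?thesis using cR Lt0 k by (intro exI[of _ "{0}"]) auto
    next
      case 3 then show ?thesis using surjB by blast
    qed
  qed
  note surj = this
  have RBs: "\<exists>W. W \<in> Hv k \<and> f W = j \<and> sd W Z \<in> Lt k"
    if Z: "Z \<subseteq> ?M" "Z \<noteq> {}" and j: "j \<in> {1..n}" for Z j
  proof (cases "Z \<in> Lt k")
    case True then show ?thesis using P2 j by blast
  next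
    case False
    then have ZH: "Z \<in> Hv k" using sub_cases[OF Z(1)] Z(2) by blast
    obtain A where A: "A \<in> Hv k" "sd A {0} \<in> Hv k" "f A = j" "f (sd A {0}) = j"
      using P1[OF Lt0 j j] by blast
    have ne: "A \<noteq> sd A {0}" unfolding sd_def by blast
    obtain W where W: "W \<in> Hv k" "f W = j" "W \<noteq> Z"
    proof (cases "A = Z")
      case True
      then have "sd A {0} \<noteq> Z" using ne by simp
      then show ?thesis using that A by blast
    next
      case False
      then show ?thesis using that A by blast
    qed
    have "sd W Z \<subseteq> ?M" using W ZH unfolding Hv_def sd_def by auto
    moreover have "sd W Z \<noteq> {}" using W(3) sd_empty_iff[of W Z] by simp
    moreover have "card (sd W Z) \<le> 2*k" using SF[OF W(1) ZH] .
    ultimately show ?thesis using W unfolding Lt_def by blast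
  qed
  show "(\<exists>A\<subseteq>?M. colf k f A = x \<and> colf k f (sd A Z) = y) \<longleftrightarrow> cyc x y (colf k f Z)"
    if Z: "Z \<subseteq> ?M" and x: "x \<in> atoms n" and y: "y \<in> atoms n" for Z x y
  proof -
    have sdM: "sd A Z \<subseteq> ?M" if "A \<subseteq> ?M" for A using sd_sub[OF that Z] .
    show ?thesis
    proof (cases "x = IdA")
      case True
      have "(\<exists>A\<subseteq>?M. colf k f A = x \<and> colf k f (sd A Z) = y) \<longleftrightarrow> colf k f Z = y"
        using True cI by auto
      then show ?thesis using True unfolding cyc_def by auto
    next
      case xI: False
      show ?thesis
      proof (cases "y = IdA")
        case True
        have "(\<exists>A\<subseteq>?M. colf k f A = x \<and> colf k f (sd A Z) = y) \<longleftrightarrow> colf k f Z = x"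
        proof
          assume "\<exists>A\<subseteq>?M. colf k f A = x \<and> colf k f (sd A Z) = y"
          then obtain A where "A \<subseteq> ?M" "colf k f A = x" "colf k f (sd A Z) = y" by blast
          then have "sd A Z = {}" using True cI by simp
          then have "A = Z" using sd_empty_iff[of A Z] by simp
          then show "colf k f Z = x" using \<open>colf k f A = x\<close> by simp
        next
          assume "colf k f Z = x" then show "\<exists>A\<subseteq>?M. colf k f A = x \<and> colf k f (sd A Z) = y"
            using Z True cI by (intro exI[of _ Z]) auto
        qed
        then show ?thesis using True xI unfolding cyc_def by auto
      next
        case yI: False
        show ?thesis
        proof (cases "Z = {}")
          case True
          have sdE: "sd A Z = A" for A unfolding True sd_def by blast
          have "(\<exists>A\<subseteq>?M. colf k f A = x \<and> colf k f (sd A Z) = y) \<longleftrightarrow> x = y"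
          proof
            assume "\<exists>A\<subseteq>?M. colf k f A = x \<and> colf k f (sd A Z) = y"
            then obtain A where "colf k f A = x" "colf k f (sd A Z) = y" by blast
            then show "x = y" unfolding sdE by simp
          next
            assume xy: "x = y"
            obtain A where "A \<subseteq> ?M" "colf k f A = x" using surj[OF x] by blast
            then show "\<exists>A\<subseteq>?M. colf k f A = x \<and> colf k f (sd A Z) = y" unfolding sdE xy by blast
          qed
          then show ?thesis using True xI yI cI unfolding cyc_def by auto
        next
          case ZnE: False
          have cyc_eq: "cyc x y (colf k f Z) \<longleftrightarrow> (x = RA \<or> y = RA \<or> colf k f Z = RA)"
            using xI yI ZnE cI unfolding cyc_def by auto
          have xc: "x = RA \<or> (\<exists>i\<in>{1..n}. x = BA i)" using x xI unfolding atoms_def by auto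
          have yc: "y = RA \<or> (\<exists>i\<in>{1..n}. y = BA i)" using y yI unfolding atoms_def by auto
          show ?thesis unfolding cyc_eq
          proof
            assume "\<exists>A\<subseteq>?M. colf k f A = x \<and> colf k f (sd A Z) = y"
            then obtain A where A: "A \<subseteq> ?M" "colf k f A = x" "colf k f (sd A Z) = y" by blast
            show "x = RA \<or> y = RA \<or> colf k f Z = RA"
            proof (rule ccontr)
              assume "\<not> (x = RA \<or> y = RA \<or> colf k f Z = RA)"
              then have "x \<noteq> RA" "y \<noteq> RA" "colf k f Z \<noteq> RA" by auto
              then obtain i j where "x = BA i" "y = BA j" using xc yc by blast
              then have AH: "A \<in> Hv k" and AZH: "sd A Z \<in> Hv k"
                using A cB[OF A(1)] cB[OF sdM[OF A(1)]] by auto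
              have "Z \<notin> Lt k" using cR[OF Z] \<open>colf k f Z \<noteq> RA\<close> by blast
              then have ZH: "Z \<in> Hv k" using sub_cases[OF Z] ZnE by blast
              have "sd A (sd A Z) = Z" by (rule sd_cancel)
              then have "card Z \<le> 2*k" using SF[OF AH AZH] by simp
              then show False using ZH unfolding Hv_def by auto
            qed
          next
            assume H: "x = RA \<or> y = RA \<or> colf k f Z = RA"
            show "\<exists>A\<subseteq>?M. colf k f A = x \<and> colf k f (sd A Z) = y"
            proof (cases "x = RA")
              case xR: True
              show ?thesis
              proof (cases "y = RA")
                case True
                obtain A where "A \<in> Lt k" "sd A Z \<in> Lt k" using RR[OF k Z ZnE] by blast
                then show ?thesis using xR True cR sdM unfolding Lt_def by (intro exI[of _ A]) auto
              next
                case False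
                then obtain j where j: "j \<in> {1..n}" "y = BA j" using yc by blast
                obtain W where W: "W \<in> Hv k" "f W = j" "sd W Z \<in> Lt k" using RBs[OF Z ZnE j(1)] by blast
                have WM: "W \<subseteq> ?M" using W unfolding Hv_def by auto
                have "sd (sd W Z) Z = W" by (rule sd_cancel2)
                then show ?thesis using W WM xR j cR[OF sdM[OF WM]] cB[OF WM] sdM[OF WM]
                  by (intro exI[of _ "sd W Z"]) auto
              qed
            next
              case xnR: False
              then obtain i where i: "i \<in> {1..n}" "x = BA i" using xc by blast
              show ?thesis
              proof (cases "y = RA")
                case True
                obtain W where W: "W \<in> Hv k" "f W = i" "sd W Z \<in> Lt k" using RBs[OF Z ZnE i(1)] by blast
                have WM: "W \<subseteq> ?M" using W unfolding Hv_def by auto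
                show ?thesis using W WM True i cR[OF sdM[OF WM]] cB[OF WM]
                  by (intro exI[of _ W]) auto
              next
                case False
                then obtain j where j: "j \<in> {1..n}" "y = BA j" using yc by blast
                have "colf k f Z = RA" using H xnR False by blast
                then have ZL: "Z \<in> Lt k" using cR[OF Z] by blast
                obtain A where A: "A \<in> Hv k" "sd A Z \<in> Hv k" "f A = i" "f (sd A Z) = j"
                  using P1[OF ZL i(1) j(1)] by blast
                have AM: "A \<subseteq> ?M" using A unfolding Hv_def by auto
                show ?thesis using A AM i j cB[OF AM] cB[OF sdM[OF AM]]
                  by (intro exI[of _ A]) auto
              qed
            qed
          qed
        qed
      qed
    qed
  qed
qed



lemma B1: "3^h \<le> (2*h+1) choose h"
proof (induction h)
  case 0 then show ?case by simp
next
  case (Suc h)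
  define a where "a = (2*h+1) choose h"
  define c where "c = Suc (2*h+1) choose Suc h"
  define b where "b = Suc (Suc (2*h+1)) choose Suc (Suc h)"
  have e1: "Suc (2*h+1) * a = c * Suc h"
    unfolding a_def c_def by (rule Suc_times_binomial_eq)
  have e2: "Suc (Suc (2*h+1)) * c = b * Suc (Suc h)"
    unfolding b_def c_def by (rule Suc_times_binomial_eq)
  have e: "b * (Suc (Suc h) * Suc h) = (Suc (Suc (2*h+1)) * Suc (2*h+1)) * a"
  proof -
    have "b * (Suc (Suc h) * Suc h) = (b * Suc (Suc h)) * Suc h" by (simp only: mult.assoc)
    also have "\<dots> = (Suc (Suc (2*h+1)) * c) * Suc h" using e2 by (simp only:)
    also have "\<dots> = Suc (Suc (2*h+1)) * (c * Suc h)" by (simp only: mult.assoc)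
    also have "\<dots> = Suc (Suc (2*h+1)) * (Suc (2*h+1) * a)" using e1 by simp
    finally show ?thesis by (simp only: mult.assoc)
  qed
  have le: "3 * (Suc (Suc h) * Suc h) \<le> Suc (Suc (2*h+1)) * Suc (2*h+1)" by (simp add: algebra_simps)
  have "3 * a * (Suc (Suc h) * Suc h) \<le> b * (Suc (Suc h) * Suc h)"
    unfolding e using mult_le_mono1[OF le, of a] by (simp add: algebra_simps)
  then have "3 * a \<le> b" by (metis mult_le_cancel2 zero_less_Suc mult_pos_pos)
  moreover have "3^h \<le> a" using Suc.IH unfolding a_def .
  ultimately have b3: "3^(Suc h) \<le> b" by simp
  have x: "(2*Suc h+1) choose Suc h = (2*Suc h+1) choose (2*Suc h+1 - Suc h)"
    by (rule binomial_symmetric) simp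
  have y1: "2*Suc h+1 - Suc h = Suc (Suc h)" by simp
  have y2: "2*Suc h+1 = Suc (Suc (2*h+1))" by simp
  have x2: "(2*Suc h+1) choose Suc h = (2*Suc h+1) choose Suc (Suc h)" using x unfolding y1 .
  have z: "(Suc (Suc (2*h+1))) choose Suc h = b" using x2 unfolding y2 b_def .
  have "(2*Suc h+1) choose Suc h = b" unfolding y2 using z .
  then show ?case using b3 by simp
qed

lemma B2: "3^L \<le> 3 * ((2*L) choose L)"
proof (cases L)
  case 0 then show ?thesis by simp
next
  case (Suc l)
  have "(2*L) choose L = (Suc (2*l+1) choose Suc l)" using Suc by simp
  also have "\<dots> = ((2*l+1) choose l) + ((2*l+1) choose (Suc l))"
    by (rule binomial_Suc_Suc)
  finally have x: "(2*L) choose L = ((2*l+1) choose l) + ((2*l+1) choose (Suc l))" .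
  have "(2*l+1) choose l = (2*l+1) choose (2*l+1-l)" by (rule binomial_symmetric) simp
  also have "2*l+1-l = Suc l" by simp
  finally have "(2*l+1) choose (Suc l) = (2*l+1) choose l" by simp
  moreover note x
  ultimately have "(2*L) choose L = 2 * ((2*l+1) choose l)" by simp
  then show ?thesis using B1[of l] Suc by simp
qed

lemma B3: "2*L \<le> a \<Longrightarrow> 3^L \<le> 3 * (a choose L)"
  using B2[of L] binomial_right_mono[of "2*L" a L] by linarith

definition gq :: "nat set \<Rightarrow> nat set \<times> nat set \<Rightarrow> nat set" where
  "gq M PQ = M - (fst PQ \<union> snd PQ)"

lemma gq_inj:
  assumes "Z \<subseteq> M"
  shows "inj_on (gq M) (Pow Z \<times> Pow (M - Z))"
proof (rule inj_onI)
  fix x y assume x: "x \<in> Pow Z \<times> Pow (M - Z)" and y: "y \<in> Pow Z \<times> Pow (M - Z)" and e: "gq M x = gq M y"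
  obtain P Q where xPQ: "x = (P, Q)" by (cases x)
  obtain P' Q' where yPQ: "y = (P', Q')" by (cases y)
  have s: "P \<subseteq> Z" "Q \<subseteq> M - Z" "P' \<subseteq> Z" "Q' \<subseteq> M - Z" using x y xPQ yPQ by auto
  have "M - (P \<union> Q) = M - (P' \<union> Q')" using e xPQ yPQ unfolding gq_def by simp
  then have u: "P \<union> Q = P' \<union> Q'" using s assms by blast
  have "P = P'"
  proof -
    have "P = Z \<inter> (P \<union> Q)" using s by blast
    also have "\<dots> = Z \<inter> (P' \<union> Q')" using u by simp
    also have "\<dots> = P'" using s by blast
    finally show ?thesis .
  qed
  moreover have "Q = Q'"
  proof -
    have "Q = (P \<union> Q) - Z" using s by blast
    also have "\<dots> = (P' \<union> Q') - Z" using u by simp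
    also have "\<dots> = Q'" using s by blast
    finally show ?thesis .
  qed
  ultimately show "x = y" using xPQ yPQ by simp
qed

lemma gq_card:
  assumes "Z \<subseteq> M" "\<P> \<subseteq> Pow Z" "\<Q> \<subseteq> Pow (M - Z)" "finite M"
  shows "card (gq M ` (\<P> \<times> \<Q>)) = card \<P> * card \<Q>"
proof -
  have fin: "finite \<P>" "finite \<Q>" using assms finite_subset[OF assms(2)] finite_subset[OF assms(3)]
    by (auto intro: finite_subset)
  have sub: "\<P> \<times> \<Q> \<subseteq> Pow Z \<times> Pow (M - Z)" using assms(2,3) by auto
  have "inj_on (gq M) (\<P> \<times> \<Q>)" using inj_on_subset[OF gq_inj[OF assms(1)] sub] .
  then show ?thesis using card_image card_cartesian_product by metis
qed

lemma gq_props: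
  assumes "Z \<subseteq> M" "P \<subseteq> Z" "Q \<subseteq> M - Z" "finite M"
  shows "card (gq M (P, Q)) = card M - card P - card Q"
    and "sd (gq M (P, Q)) Z = gq M (Z - P, Q)"
    and "card (gq M (Z - P, Q)) = card M - (card Z - card P) - card Q"
proof -
  have fin: "finite P" "finite Q" "finite Z" using assms finite_subset by (metis Diff_subset subset_trans)+
  have d: "P \<inter> Q = {}" using assms by blast
  have c1: "card (P \<union> Q) = card P + card Q" using card_Un_disjoint[OF fin(1,2) d] .
  show "card (gq M (P, Q)) = card M - card P - card Q"
    unfolding gq_def using card_Diff_subset[of "P \<union> Q" M] fin assms c1 by auto
  show "sd (gq M (P, Q)) Z = gq M (Z - P, Q)"
    unfolding gq_def sd_def using assms by auto
  have d2: "(Z - P) \<inter> Q = {}" using assms by blast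
  have c2: "card ((Z - P) \<union> Q) = (card Z - card P) + card Q"
    using card_Un_disjoint[of "Z - P" Q] d2 fin card_Diff_subset[OF fin(1) assms(2)] by simp
  show "card (gq M (Z - P, Q)) = card M - (card Z - card P) - card Q"
    unfolding gq_def using card_Diff_subset[of "(Z - P) \<union> Q" M] fin assms c2 by auto
qed

lemma Lt_facts:
  assumes "Z \<in> Lt k"
  shows "Z \<subseteq> {..<3*k+1}" "1 \<le> card Z" "card Z \<le> 2*k" "finite Z" "Z \<noteq> {}"
proof -
  show Z: "Z \<subseteq> {..<3*k+1}" "card Z \<le> 2*k" "Z \<noteq> {}" using assms unfolding Lt_def by auto
  show f: "finite Z" using Z(1) fin_sub by auto
  show "1 \<le> card Z" using f Z(3) by (simp add: Suc_le_eq card_gt_0_iff)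
qed

lemma card_F: "Z \<subseteq> {..<m} \<Longrightarrow> card ({..<m} - Z) = m - card Z"
  using card_Diff_subset[of Z "{..<m}"] fin_sub by auto

lemma ge_div3: "3 * 3^(k-2) \<le> 3 * (x::nat) \<Longrightarrow> 3^(k-2) \<le> x" by simp

lemma P_even_card:
  assumes fZ: "finite Z" and z0: "z0 \<in> Z" and h: "1 \<le> h"
  shows "card Z - 1 choose (h - 1) \<le> card {P. P \<subseteq> Z \<and> card P = h \<and> z0 \<in> P}"
proof -
  let ?S = "{P'. P' \<subseteq> Z - {z0} \<and> card P' = h - 1}"
  have cS: "card ?S = card Z - 1 choose (h - 1)"
    using n_subsets[of "Z - {z0}" "h-1"] fZ z0 by simp
  have inj: "inj_on (insert z0) ?S"
  proof (rule inj_onI)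
    fix x y assume "x \<in> ?S" "y \<in> ?S" "insert z0 x = insert z0 y"
    then show "x = y" by blast
  qed
  have sub: "insert z0 ` ?S \<subseteq> {P. P \<subseteq> Z \<and> card P = h \<and> z0 \<in> P}"
  proof
    fix P assume "P \<in> insert z0 ` ?S"
    then obtain P' where P': "P' \<subseteq> Z - {z0}" "card P' = h - 1" "P = insert z0 P'" by blast
    have "finite P'" using P'(1) fZ finite_subset by blast
    moreover have "z0 \<notin> P'" using P'(1) by blast
    ultimately have "card P = h" using P' h by simp
    then show "P \<in> {P. P \<subseteq> Z \<and> card P = h \<and> z0 \<in> P}" using P' z0 by blast
  qed
  have fin: "finite {P. P \<subseteq> Z \<and> card P = h \<and> z0 \<in> P}" using fZ by simp
  have "card (insert z0 ` ?S) = card ?S" using card_image[OF inj] .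
  then show ?thesis using card_mono[OF fin sub] cS by simp
qed

lemma Fam1:
  assumes k: "2 \<le> k" and Z: "Z \<in> Lt k"
  shows "\<exists>\<A>. \<A> \<subseteq> Hv k \<and> (\<forall>A\<in>\<A>. sd A Z \<in> Hv k \<and> sd A Z \<notin> \<A>) \<and> 3^(k-2) \<le> card \<A>"
proof -
  let ?M = "{..<3*k+1}"
  define c where "c = card Z"
  have ZM: "Z \<subseteq> ?M" and c1: "1 \<le> c" and c2: "c \<le> 2*k" and fZ: "finite Z" and Zne: "Z \<noteq> {}"
    using Lt_facts[OF Z] unfolding c_def by auto
  have cF: "card (?M - Z) = 3*k+1 - c" using card_F[OF ZM] unfolding c_def .
  obtain z0 where z0: "z0 \<in> Z" using Zne by blast
  define p where "p = (c+1) div 2"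
  define L where "L = k - p"
  have p1: "c \<le> 2*p" "2*p \<le> c+1" "p \<le> k" "1 \<le> p" "p \<le> c" using c1 c2 unfolding p_def by auto
  define \<P> where "\<P> = (if odd c then {P. P \<subseteq> Z \<and> card P = p} else {P. P \<subseteq> Z \<and> card P = p \<and> z0 \<in> P})"
  define \<Q> where "\<Q> = {Q. Q \<subseteq> ?M - Z \<and> card Q = L}"
  define \<A> where "\<A> = gq ?M ` (\<P> \<times> \<Q>)"
  have PP: "\<P> \<subseteq> Pow Z" and QQ: "\<Q> \<subseteq> Pow (?M - Z)" unfolding \<P>_def \<Q>_def by auto
  have Pc: "P \<subseteq> Z \<and> card P = p" if "P \<in> \<P>" for P using that unfolding \<P>_def by (auto split: if_splits)
  have Qc: "Q \<subseteq> ?M - Z \<and> card Q = L" if "Q \<in> \<Q>" for Q using that unfolding \<Q>_def by auto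
  have cardA: "card \<A> = card \<P> * card \<Q>" unfolding \<A>_def using gq_card[OF ZM PP QQ] by simp
  have cQ: "card \<Q> = (3*k+1 - c) choose L"
    unfolding \<Q>_def using n_subsets[of "?M - Z" L] cF by simp
  have Qb: "3^L \<le> 3 * card \<Q>" unfolding cQ by (rule B3) (use p1 c2 in \<open>simp add: L_def\<close>)
  have e3: "(3::nat)^(k-1) = 3 * 3^(k-2)"
  proof -
    have "k - 1 = Suc (k-2)" using k by simp
    then show ?thesis by simp
  qed
  have bound: "3^(k-2) \<le> card \<A>"
  proof (cases "odd c")
    case True
    then obtain h where h: "c = 2*h+1" using oddE by blast
    have ph: "p = h+1" unfolding p_def h by simp
    have "card \<P> = c choose p" unfolding \<P>_def using True n_subsets[OF fZ, of p] c_def by simp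
    also have "\<dots> = (2*h+1) choose h"
      unfolding h ph using binomial_symmetric[of h "2*h+1"] by simp
    finally have Pb: "3^h \<le> card \<P>" using B1[of h] by simp
    have "h + L = k - 1" unfolding L_def using ph p1 by simp
    then have "(3::nat)^(k-1) = 3^h * 3^L" by (metis power_add)
    also have "\<dots> \<le> card \<P> * (3 * card \<Q>)" using Pb Qb by (rule mult_le_mono)
    finally have "3^(k-1) \<le> 3 * (card \<P> * card \<Q>)" by (simp add: mult.left_commute)
    then have "3 * 3^(k-2) \<le> 3 * (card \<P> * card \<Q>)" using e3 by simp
    then show ?thesis unfolding cardA by (rule ge_div3)
  next
    case False
    then obtain h where h: "c = 2*h" using evenE by blast
    have ph: "p = h" unfolding p_def h by simp
    have h1: "1 \<le> h" using h c1 by simp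
    have "card Z - 1 choose (h - 1) \<le> card \<P>"
      unfolding \<P>_def using False P_even_card[OF fZ z0 h1] ph by simp
    moreover have "card Z - 1 = 2*(h-1)+1" using h h1 c_def by simp
    ultimately have Pb: "3^(h-1) \<le> card \<P>" using B1[of "h-1"] by simp
    have "(h-1) + L = k - 1" unfolding L_def using ph p1 h1 by simp
    then have "(3::nat)^(k-1) = 3^(h-1) * 3^L" by (metis power_add)
    also have "\<dots> \<le> card \<P> * (3 * card \<Q>)" using Pb Qb by (rule mult_le_mono)
    finally have "3^(k-1) \<le> 3 * (card \<P> * card \<Q>)" by (simp add: mult.left_commute)
    then have "3 * 3^(k-2) \<le> 3 * (card \<P> * card \<Q>)" using e3 by simp
    then show ?thesis unfolding cardA by (rule ge_div3)
  qed
  have props: "sd A Z \<in> Hv k \<and> sd A Z \<notin> \<A> \<and> A \<in> Hv k" if A: "A \<in> \<A>" for A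
  proof -
    obtain P Q where PQ: "P \<in> \<P>" "Q \<in> \<Q>" "A = gq ?M (P, Q)" using A unfolding \<A>_def by blast
    have P: "P \<subseteq> Z" "card P = p" using Pc[OF PQ(1)] by auto
    have Q: "Q \<subseteq> ?M - Z" "card Q = L" using Qc[OF PQ(2)] by auto
    note g = gq_props[OF ZM P(1) Q(1)]
    have "card A = 3*k+1 - p - L" using g(1) PQ(3) P Q by simp
    then have cA: "card A = 2*k+1" using p1 unfolding L_def by simp
    have "A \<subseteq> ?M" unfolding PQ(3) gq_def by auto
    then have AH: "A \<in> Hv k" unfolding Hv_def using cA by simp
    have e: "sd A Z = gq ?M (Z - P, Q)" using g(2) PQ(3) by simp
    have "card (sd A Z) = 3*k+1 - (c - p) - L" using g(3) e P Q c_def by simp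
    then have "2*k+1 \<le> card (sd A Z)" using p1 unfolding L_def by simp
    moreover have "sd A Z \<subseteq> ?M" unfolding e gq_def by auto
    ultimately have sH: "sd A Z \<in> Hv k" unfolding Hv_def by simp
    have "sd A Z \<notin> \<A>"
    proof
      assume "sd A Z \<in> \<A>"
      then obtain P' Q' where PQ': "P' \<in> \<P>" "Q' \<in> \<Q>" "sd A Z = gq ?M (P', Q')" unfolding \<A>_def by blast
      have m1: "(Z - P, Q) \<in> Pow Z \<times> Pow (?M - Z)" using Q by auto
      have m2: "(P', Q') \<in> Pow Z \<times> Pow (?M - Z)" using PQ'(1,2) PP QQ by auto
      have "gq ?M (Z - P, Q) = gq ?M (P', Q')" using e PQ'(3) by simp
      then have "(Z - P, Q) = (P', Q')" by (rule inj_onD[OF gq_inj[OF ZM] _ m1 m2])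
      then have ZP: "Z - P \<in> \<P>" using PQ' by simp
      show False
      proof (cases "odd c")
        case True
        have "card (Z - P) = c - p" using card_Diff_subset[OF finite_subset[OF P(1) fZ] P(1)] c_def P(2) by simp
        moreover have "card (Z - P) = p" using Pc[OF ZP] by simp
        moreover obtain h where h: "c = 2*h+1" using True oddE by blast
        moreover have "p = h+1" unfolding p_def h by simp
        ultimately show False by simp
      next
        case False
        then have "z0 \<in> Z - P" using ZP unfolding \<P>_def by simp
        moreover have "z0 \<in> P" using PQ(1) False unfolding \<P>_def by simp
        ultimately show False by simp
      qed
    qed
    then show ?thesis using sH AH by simp
  qed
  show ?thesis using bound props by blast
qed

lemma Fam2:
  assumes k: "2 \<le> k" and Z: "Z \<in> Lt k"
  shows "3^(k-2) \<le> card {W \<in> Hv k. sd W Z \<in> Lt k}"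
proof -
  let ?M = "{..<3*k+1}"
  define c where "c = card Z"
  have ZM: "Z \<subseteq> ?M" and c1: "1 \<le> c" and c2: "c \<le> 2*k" and fZ: "finite Z"
    using Lt_facts[OF Z] unfolding c_def by auto
  have cF: "card (?M - Z) = 3*k+1 - c" using card_F[OF ZM] unfolding c_def .
  define p where "p = (c - 1) div 2"
  define L where "L = k - p"
  have p1: "2*p + 1 \<le> c" "c \<le> 2*p + 2" "p \<le> k" using c1 c2 unfolding p_def by auto
  define \<P> where "\<P> = {P. P \<subseteq> Z \<and> card P = p}"
  define \<Q> where "\<Q> = {Q. Q \<subseteq> ?M - Z \<and> card Q = L}"
  define \<A> where "\<A> = gq ?M ` (\<P> \<times> \<Q>)"
  have PP: "\<P> \<subseteq> Pow Z" and QQ: "\<Q> \<subseteq> Pow (?M - Z)" unfolding \<P>_def \<Q>_def by auto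
  have cardA: "card \<A> = card \<P> * card \<Q>" unfolding \<A>_def using gq_card[OF ZM PP QQ] by simp
  have cP: "card \<P> = c choose p" unfolding \<P>_def using n_subsets[OF fZ, of p] c_def by simp
  have cQ: "card \<Q> = (3*k+1 - c) choose L"
    unfolding \<Q>_def using n_subsets[of "?M - Z" L] cF by simp
  have Qb: "3^L \<le> 3 * card \<Q>" unfolding cQ by (rule B3) (use p1 c2 k in \<open>simp add: L_def\<close>)
  have Pb: "3^p \<le> card \<P>"
  proof (cases "odd c")
    case True
    then obtain h where h: "c = 2*h+1" using oddE by blast
    have "p = h" unfolding p_def h by simp
    then show ?thesis unfolding cP h using B1[of h] by simp
  next
    case False
    then obtain h where h: "c = 2*h" using evenE by blast
    have h1: "1 \<le> h" using h c1 by simp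
    have ph: "p = h - 1" unfolding p_def h by simp
    have "(2*(h-1)+1) choose (h-1) \<le> (2*h) choose (h-1)"
      by (rule binomial_right_mono) (use h1 in simp)
    then show ?thesis unfolding cP h ph using B1[of "h-1"] by simp
  qed
  have "(3::nat)^k = 3^p * 3^L" unfolding L_def using p1 by (simp add: power_add[symmetric])
  also have "\<dots> \<le> card \<P> * (3 * card \<Q>)" using Pb Qb by (rule mult_le_mono)
  finally have b: "3^k \<le> 3 * card \<A>" unfolding cardA by (simp add: mult.left_commute)
  have e3: "(3::nat)^(k-1) = 3 * 3^(k-2)"
  proof -
    have "k - 1 = Suc (k-2)" using k by simp
    then show ?thesis by simp
  qed
  have "(3::nat)^(k-1) \<le> 3^k" by (rule power_increasing) simp_all
  then have "3 * 3^(k-2) \<le> 3 * card \<A>" using b e3 by linarith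
  then have bound: "3^(k-2) \<le> card \<A>" by (rule ge_div3)
  have sub: "\<A> \<subseteq> {W \<in> Hv k. sd W Z \<in> Lt k}"
  proof
    fix A assume A: "A \<in> \<A>"
    obtain P Q where PQ: "P \<in> \<P>" "Q \<in> \<Q>" "A = gq ?M (P, Q)" using A unfolding \<A>_def by blast
    have P: "P \<subseteq> Z" "card P = p" using PQ(1) unfolding \<P>_def by auto
    have Q: "Q \<subseteq> ?M - Z" "card Q = L" using PQ(2) unfolding \<Q>_def by auto
    note g = gq_props[OF ZM P(1) Q(1)]
    have "card A = 3*k+1 - p - L" using g(1) PQ(3) P Q by simp
    then have cA: "card A = 2*k+1" using p1 unfolding L_def by simp
    have "A \<subseteq> ?M" unfolding PQ(3) gq_def by auto
    then have AH: "A \<in> Hv k" unfolding Hv_def using cA by simp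
    have e: "sd A Z = gq ?M (Z - P, Q)" using g(2) PQ(3) by simp
    have "card (sd A Z) = 3*k+1 - (c - p) - L" using g(3) e P Q c_def by simp
    then have cs: "1 \<le> card (sd A Z)" "card (sd A Z) \<le> 2*k" using p1 k unfolding L_def by simp_all
    have "sd A Z \<noteq> {}" using cs(1) by auto
    moreover have "sd A Z \<subseteq> ?M" unfolding e gq_def by auto
    ultimately have "sd A Z \<in> Lt k" unfolding Lt_def using cs by simp
    then show "A \<in> {W \<in> Hv k. sd W Z \<in> Lt k}" using AH by simp
  qed
  have fin: "finite {W \<in> Hv k. sd W Z \<in> Lt k}"
  proof -
    have "{W \<in> Hv k. sd W Z \<in> Lt k} \<subseteq> Pow ?M" unfolding Hv_def by auto
    then show ?thesis using finite_subset by blast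
  qed
  show ?thesis using bound card_mono[OF fin sub] by simp
qed



lemma count_pairs:
  fixes S :: "'a set" and N :: "'b set" and \<sigma> :: "'a \<Rightarrow> 'a"
  assumes fS: "finite S" and fN: "finite N" and AS: "\<A> \<subseteq> S" and sAS: "\<sigma> ` \<A> \<subseteq> S"
    and inv: "\<And>a. a \<in> \<A> \<Longrightarrow> \<sigma> (\<sigma> a) = a" and disj: "\<A> \<inter> \<sigma> ` \<A> = {}"
    and ij: "i \<in> N" "j \<in> N"
  shows "card {f \<in> PiE S (\<lambda>_. N). \<forall>a\<in>\<A>. \<not> (f a = i \<and> f (\<sigma> a) = j)}
           \<le> (card N * card N - 1) ^ card \<A> * card N ^ (card S - 2 * card \<A>)"
proof -
  let ?E = "{f \<in> PiE S (\<lambda>_. N). \<forall>a\<in>\<A>. \<not> (f a = i \<and> f (\<sigma> a) = j)}"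
  let ?R = "S - \<A> - \<sigma> ` \<A>"
  define \<Phi> where "\<Phi> f = (restrict (\<lambda>a. (f a, f (\<sigma> a))) \<A>, restrict f ?R)" for f :: "'a \<Rightarrow> 'b"
  let ?T = "PiE \<A> (\<lambda>_. N \<times> N - {(i, j)}) \<times> PiE ?R (\<lambda>_. N)"
  have img: "\<Phi> ` ?E \<subseteq> ?T"
  proof
    fix y assume "y \<in> \<Phi> ` ?E"
    then obtain f where f: "f \<in> ?E" "y = \<Phi> f" by blast
    have fS: "f \<in> PiE S (\<lambda>_. N)" and fa: "\<forall>a\<in>\<A>. \<not> (f a = i \<and> f (\<sigma> a) = j)" using f by auto
    have "restrict (\<lambda>a. (f a, f (\<sigma> a))) \<A> \<in> PiE \<A> (\<lambda>_. N \<times> N - {(i, j)})"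
    proof (rule restrict_PiE_iff[THEN iffD2], intro ballI)
      fix a assume a: "a \<in> \<A>"
      have "a \<in> S" "\<sigma> a \<in> S" using a AS sAS by auto
      then have "f a \<in> N" "f (\<sigma> a) \<in> N" using fS by auto
      then show "(f a, f (\<sigma> a)) \<in> N \<times> N - {(i, j)}" using fa a by auto
    qed
    moreover have "restrict f ?R \<in> PiE ?R (\<lambda>_. N)"
      using fS by (auto simp: restrict_PiE_iff)
    ultimately show "y \<in> ?T" unfolding f(2) \<Phi>_def by simp
  qed
  have inj: "inj_on \<Phi> ?E"
  proof (rule inj_onI)
    fix f g assume f: "f \<in> ?E" and g: "g \<in> ?E" and e: "\<Phi> f = \<Phi> g"
    have fS: "f \<in> PiE S (\<lambda>_. N)" and gS: "g \<in> PiE S (\<lambda>_. N)" using f g by auto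
    have e1: "restrict (\<lambda>a. (f a, f (\<sigma> a))) \<A> = restrict (\<lambda>a. (g a, g (\<sigma> a))) \<A>"
      and e2: "restrict f ?R = restrict g ?R" using e unfolding \<Phi>_def by auto
    show "f = g"
    proof
      fix x
      show "f x = g x"
      proof (cases "x \<in> S")
        case False then show ?thesis using fS gS by (auto simp: PiE_def extensional_def)
      next
        case xS: True
        show ?thesis
        proof (cases "x \<in> \<A>")
          case True
          have "(f x, f (\<sigma> x)) = (g x, g (\<sigma> x))" using fun_cong[OF e1, of x] True by simp
          then show ?thesis by simp
        next
          case nA: False
          show ?thesis
          proof (cases "x \<in> \<sigma> ` \<A>")
            case True
            then obtain a where a: "a \<in> \<A>" "x = \<sigma> a" by blast
            have "(f a, f (\<sigma> a)) = (g a, g (\<sigma> a))" using fun_cong[OF e1, of a] a by simp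
            then show ?thesis using a by simp
          next
            case False
            then have "x \<in> ?R" using xS nA by blast
            then show ?thesis using fun_cong[OF e2, of x] by simp
          qed
        qed
      qed
    qed
  qed
  have fA: "finite \<A>" using AS fS finite_subset by blast
  have finT: "finite ?T" using fA fS fN by (intro finite_cartesian_product finite_PiE) auto
  have le: "card ?E \<le> card ?T" using card_inj_on_le[OF inj img finT] .
  have injs: "inj_on \<sigma> \<A>" by (rule inj_onI) (metis inv)
  have cs: "card (\<sigma> ` \<A>) = card \<A>" using card_image[OF injs] .
  have cU: "card (\<A> \<union> \<sigma> ` \<A>) = 2 * card \<A>"
    using card_Un_disjoint[OF fA finite_imageI[OF fA] disj] cs by simp
  have R: "?R = S - (\<A> \<union> \<sigma> ` \<A>)" by blast
  have cR: "card ?R = card S - 2 * card \<A>"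
    unfolding R using card_Diff_subset[OF finite_UnI[OF fA finite_imageI[OF fA]]] AS sAS cU by auto
  have cNN: "card (N \<times> N - {(i, j)}) = card N * card N - 1"
    using ij fN by (simp add: card_cartesian_product)
  have "card ?T = (card N * card N - 1) ^ card \<A> * card N ^ card ?R"
    using fA fS cNN by (simp add: card_cartesian_product card_PiE)
  then show ?thesis using le cR by simp
qed

lemma count_avoid:
  assumes fS: "finite S" and GS: "G \<subseteq> S" and fN: "finite N" and j: "j \<in> N"
  shows "card {f \<in> PiE S (\<lambda>_. N). \<forall>W\<in>G. f W \<noteq> j} = (card N - 1) ^ card G * card N ^ (card S - card G)"
proof -
  have e: "{f \<in> PiE S (\<lambda>_. N). \<forall>W\<in>G. f W \<noteq> j} = PiE S (\<lambda>x. if x \<in> G then N - {j} else N)"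
    using GS by (auto simp: PiE_def Pi_def split: if_splits)
  have "card (PiE S (\<lambda>x. if x \<in> G then N - {j} else N)) = (\<Prod>x\<in>S. card (if x \<in> G then N - {j} else N))"
    using card_PiE[OF fS] .
  also have "\<dots> = (\<Prod>x\<in>S. if x \<in> G then card N - 1 else card N)"
    using j fN by (intro prod.cong) auto
  also have "\<dots> = (\<Prod>x\<in>G. card N - 1) * (\<Prod>x\<in>S - G. card N)"
  proof -
    have s1: "S \<inter> {x. x \<in> G} = G" "S \<inter> - {x. x \<in> G} = S - G" using GS by auto
    show ?thesis using prod.If_cases[OF fS, of "\<lambda>x. x \<in> G" "\<lambda>_. card N - 1" "\<lambda>_. card N"]
      unfolding s1 .
  qed
  also have "\<dots> = (card N - 1) ^ card G * card N ^ (card S - card G)"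
  proof -
    have "card (S - G) = card S - card G" using card_Diff_subset[OF finite_subset[OF GS fS] GS] .
    then show ?thesis by simp
  qed
  finally show ?thesis unfolding e .
qed



lemma half_pow:
  assumes N: "2 \<le> N"
  shows "(1 - 1 / real N) ^ N \<le> 1/2"
proof -
  define x where "x = 1 / (real N - 1)"
  have N1: "real N - 1 \<ge> 1" using N by simp
  have x0: "0 \<le> x" unfolding x_def using N1 by simp
  have "1 + real N * x \<le> (1 + x) ^ N" using Bernoulli_inequality[of x N] x0 by simp
  moreover have "1 + real N * x \<ge> 2"
  proof -
    have "real N * x = real N / (real N - 1)" unfolding x_def by simp
    also have "\<dots> \<ge> 1" using N1 by simp
    finally show ?thesis by simp
  qed
  ultimately have a2: "2 \<le> (1 + x) ^ N" by linarith
  have e: "1 - 1 / real N = inverse (1 + x)"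
    unfolding x_def using N1 by (simp add: field_simps)
  have "(1 - 1 / real N) ^ N = inverse ((1 + x) ^ N)" unfolding e by (simp add: power_inverse)
  also have "\<dots> \<le> inverse 2" using a2 by (intro le_imp_inverse_le) auto
  finally show ?thesis by simp
qed

lemma pow_div_bound:
  fixes a :: real
  assumes a0: "0 \<le> a" and a1: "a \<le> 1" and aK: "a ^ K \<le> 1/2" and K: "0 < K"
  shows "a ^ D \<le> (1/2) ^ (D div K)"
proof -
  have "K * (D div K) \<le> D" by simp
  then have "a ^ D \<le> a ^ (K * (D div K))" using power_decreasing a0 a1 by blast
  also have "\<dots> = (a ^ K) ^ (D div K)" by (simp add: power_mult)
  also have "\<dots> \<le> (1/2) ^ (D div K)" using aK a0 by (intro power_mono) auto
  finally show ?thesis .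
qed

lemma k_sq: "5 \<le> k \<Longrightarrow> k^2 < (2::nat)^k"
proof (induction k rule: nat_induct_at_least)
  case base then show ?case by simp
next
  case (Suc k)
  have "(Suc k)^2 = k^2 + 2*k + 1" by (simp add: power2_eq_square)
  also have "\<dots> \<le> 2 * k^2"
  proof -
    have "5 * k \<le> k * k" using Suc.hyps by (intro mult_le_mono1)
    then show ?thesis unfolding power2_eq_square using Suc.hyps by linarith
  qed
  also have "\<dots> < 2 * 2^k" using Suc.IH by simp
  finally show ?case by simp
qed

lemma k_cub: "14 \<le> k \<Longrightarrow> (4*k+2) * k^2 \<le> (3::nat)^(k-2)"
proof (induction k rule: nat_induct_at_least)
  case base then show ?case by simp
next
  case (Suc k)
  have poly: "(4*(Suc k)+2) * (Suc k)^2 \<le> 3 * ((4*k+2) * k^2)"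
  proof -
    have "(4*(Suc k)+2) * (Suc k)^2 = 4*k^3 + 14*k^2 + 16*k + 6"
      by (simp add: power2_eq_square power3_eq_cube algebra_simps)
    moreover have "3 * ((4*k+2) * k^2) = 12*k^3 + 6*k^2"
      by (simp add: power2_eq_square power3_eq_cube algebra_simps)
    moreover have "8*k^2 + 16*k + 6 \<le> 8*k^3"
    proof -
      have "k^2 * 14 \<le> k^2 * k" using Suc.hyps by (intro mult_le_mono2)
      then have "k^2 * 14 \<le> k^3" by (simp add: power2_eq_square power3_eq_cube)
      moreover have "14 * k \<le> k * k" using Suc.hyps by (intro mult_le_mono1)
      then have "16*k + 6 \<le> 2 * k^2" using Suc.hyps unfolding power2_eq_square by linarith
      ultimately show ?thesis by linarith
    qed
    ultimately show ?thesis by linarith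
  qed
  also have "\<dots> \<le> 3 * 3^(k-2)" using Suc.IH by simp
  also have "\<dots> = 3^(Suc k - 2)"
  proof -
    have "Suc k - 2 = Suc (k - 2)" using Suc.hyps by simp
    then show ?thesis by simp
  qed
  finally show ?case .
qed

lemma ineq_core:
  assumes k: "14 \<le> k" and n: "1 \<le> n" "n \<le> k" and l: "ll \<le> (2::nat)^(3*k+1)"
  shows "real ll * real n ^ 2 * (1 - 1 / real n ^ 2) ^ (3^(k-2))
         + real ll * real n * (1 - 1 / real n) ^ (3^(k-2)) < 1"
proof -
  define D where "D = (3::nat)^(k-2)"
  define K where "K = k^2"
  define a where "a = 1 - 1 / real n ^ 2"
  define b where "b = 1 - 1 / real n"
  define ak where "ak = 1 - 1 / real k ^ 2"
  define t where "t = (1/2::real) ^ (4*k+2)"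
  have n1: "1 \<le> real n" and nk: "real n \<le> real k" using n by auto
  have n2: "real n \<le> real n ^ 2" using n1 by (simp add: power2_eq_square)
  have b0: "0 \<le> b" unfolding b_def using n1 by simp
  have ba: "b \<le> a" unfolding a_def b_def using n1 n2
    by (simp add: frac_le)
  have a0: "0 \<le> a" using b0 ba by simp
  have aak: "a \<le> ak" unfolding a_def ak_def using n1 nk
    by (simp add: frac_le power_mono)
  have ak1: "ak \<le> 1" unfolding ak_def by simp
  have K2: "2 \<le> K"
  proof -
    have "k \<le> k * k" by (rule le_square)
    then show ?thesis unfolding K_def power2_eq_square using k by linarith
  qed
  have akK: "ak ^ K \<le> 1/2" using half_pow[OF K2] unfolding ak_def K_def by simp
  have akD: "ak ^ D \<le> (1/2) ^ (D div K)"
    by (rule pow_div_bound[OF _ ak1 akK]) (use a0 aak K2 in auto)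
  have "(4*k+2) * K \<le> D" unfolding D_def K_def using k_cub[OF k] .
  then have "((4*k+2) * K) div K \<le> D div K" by (rule div_le_mono)
  then have dk: "4*k+2 \<le> D div K" using K2 by simp
  have "(1/2::real) ^ (D div K) \<le> t" unfolding t_def by (rule power_decreasing[OF dk]) auto
  then have aD: "a ^ D \<le> t" using akD power_mono[OF aak a0, of D] by linarith
  have bD: "b ^ D \<le> t" using aD power_mono[OF ba b0, of D] by linarith
  have t0: "0 \<le> t" unfolding t_def by simp
  have "real ll \<le> real ((2::nat)^(3*k+1))" using l by (simp only: of_nat_le_iff)
  then have l2: "real ll \<le> 2^(3*k+1)" by simp
  have "real ll * real n ^ 2 * a ^ D + real ll * real n * b ^ D \<le> real ll * real n ^ 2 * t + real ll * real n * t"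
    using aD bD by (intro add_mono mult_left_mono) auto
  also have "\<dots> = real ll * (real n ^ 2 + real n) * t" by (simp add: algebra_simps)
  also have "\<dots> \<le> 2^(3*k+1) * (2 * real k ^ 2) * t"
  proof -
    have "real n ^ 2 + real n \<le> 2 * real k ^ 2" using n2 nk power_mono[OF nk, of 2] n1 by linarith
    then show ?thesis using l2 t0 by (intro mult_mono mult_right_mono) auto
  qed
  also have "\<dots> = real k ^ 2 * ((2::real)^(3*k+2) * t)" by (simp add: algebra_simps power_add)
  also have "(2::real)^(3*k+2) * t = (1/2)^k"
  proof -
    have e4: "4*k+2 = (3*k+2) + k" by simp
    have tt: "t = (1/2)^(3*k+2) * (1/2)^k" unfolding t_def e4 by (rule power_add)
    have one: "(2::real)^(3*k+2) * (1/2)^(3*k+2) = 1"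
      unfolding power_mult_distrib[symmetric] by simp
    have "(2::real)^(3*k+2) * t = ((2::real)^(3*k+2) * (1/2)^(3*k+2)) * (1/2)^k"
      unfolding tt by (simp only: mult.assoc)
    then show ?thesis unfolding one by simp
  qed
  also have "real k ^ 2 * (1/2)^k < 1"
  proof -
    have "k^2 < (2::nat)^k" using k_sq k by simp
    then have "real k ^ 2 < 2^k" by (metis of_nat_less_numeral_power_cancel_iff of_nat_power)
    then show ?thesis by (simp add: power_one_over divide_simps)
  qed
  finally show ?thesis unfolding a_def b_def D_def .
qed



lemma Hv_fin: "finite (Hv k)"
proof -
  have "Hv k \<subseteq> Pow {..<3*k+1}" unfolding Hv_def by auto
  then show ?thesis using finite_subset by blast
qed

lemma Lt_card_le: "card (Lt k) \<le> 2^(3*k+1)"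
proof -
  have "Lt k \<subseteq> Pow {..<3*k+1}" unfolding Lt_def by auto
  then have "card (Lt k) \<le> card (Pow {..<3*k+1})" by (rule card_mono[rotated]) simp
  then show ?thesis by (simp add: card_Pow)
qed

lemma real_X1:
  assumes n: "1 \<le> n" and s: "2*D \<le> s"
  shows "real ((n*n - 1)^D * n^(s - 2*D)) = real n ^ s * (1 - 1 / real n ^ 2) ^ D"
proof -
  have n0: "real n > 0" using n by simp
  have "real (n*n - 1) = real n ^ 2 * (1 - 1 / real n ^ 2)"
    using n n0 by (simp add: of_nat_diff field_simps power2_eq_square)
  then have "real ((n*n - 1)^D * n^(s - 2*D)) = (real n ^ 2) ^ D * (1 - 1 / real n ^ 2) ^ D * real n ^ (s - 2*D)"
    by (simp add: power_mult_distrib)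
  also have "(real n ^ 2) ^ D * (1 - 1 / real n ^ 2) ^ D * real n ^ (s - 2*D)
      = (real n ^ (2*D) * real n ^ (s - 2*D)) * (1 - 1 / real n ^ 2) ^ D"
    by (simp add: power_mult[symmetric] mult.commute mult.left_commute)
  also have "real n ^ (2*D) * real n ^ (s - 2*D) = real n ^ s"
    using s by (simp add: power_add[symmetric])
  finally show ?thesis .
qed

lemma real_X2:
  assumes n: "1 \<le> n" and s: "D \<le> s"
  shows "real ((n - 1)^D * n^(s - D)) = real n ^ s * (1 - 1 / real n) ^ D"
proof -
  have n0: "real n > 0" using n by simp
  have "real (n - 1) = real n * (1 - 1 / real n)"
    using n n0 by (simp add: of_nat_diff field_simps)
  then have "real ((n - 1)^D * n^(s - D)) = real n ^ D * (1 - 1 / real n) ^ D * real n ^ (s - D)"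
    by (simp add: power_mult_distrib)
  also have "\<dots> = (real n ^ D * real n ^ (s - D)) * (1 - 1 / real n) ^ D"
    by (simp add: mult.commute mult.left_commute)
  also have "real n ^ D * real n ^ (s - D) = real n ^ s"
    using s by (simp add: power_add[symmetric])
  finally show ?thesis .
qed

lemma exists_coloring:
  assumes k: "14 \<le> k" and n: "1 \<le> n" "n \<le> k"
  shows "\<exists>f. (\<forall>A. A \<in> Hv k \<longrightarrow> f A \<in> {1..n}) \<and>
     (\<forall>Z i j. Z \<in> Lt k \<longrightarrow> i \<in> {1..n} \<longrightarrow> j \<in> {1..n} \<longrightarrow>
          (\<exists>A. A \<in> Hv k \<and> sd A Z \<in> Hv k \<and> f A = i \<and> f (sd A Z) = j)) \<and>
     (\<forall>Z j. Z \<in> Lt k \<longrightarrow> j \<in> {1..n} \<longrightarrow> (\<exists>W. W \<in> Hv k \<and> f W = j \<and> sd W Z \<in> Lt k))"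
proof -
  define D where "D = (3::nat)^(k-2)"
  have k2: "2 \<le> k" using k by simp
  define PA where "PA Z \<A> \<longleftrightarrow> \<A> \<subseteq> Hv k \<and> (\<forall>A\<in>\<A>. sd A Z \<in> Hv k \<and> sd A Z \<notin> \<A>) \<and> card \<A> = D"
    for Z \<A>
  have exA: "\<exists>\<A>. PA Z \<A>" if Z: "Z \<in> Lt k" for Z
  proof -
    obtain \<A>0 where A0: "\<A>0 \<subseteq> Hv k" "\<forall>A\<in>\<A>0. sd A Z \<in> Hv k \<and> sd A Z \<notin> \<A>0" "D \<le> card \<A>0"
      using Fam1[OF k2 Z] unfolding D_def by blast
    obtain \<A> where A: "\<A> \<subseteq> \<A>0" "card \<A> = D" using A0(3) by (rule obtain_subset_with_card_n)
    have "PA Z \<A>" unfolding PA_def using A A0 by blast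
    then show ?thesis by blast
  qed
  define AZ where "AZ Z = (SOME \<A>. PA Z \<A>)" for Z
  have AZ: "PA Z (AZ Z)" if "Z \<in> Lt k" for Z
    unfolding AZ_def using someI_ex[OF exA[OF that]] .
  define PG where "PG Z G \<longleftrightarrow> G \<subseteq> {W \<in> Hv k. sd W Z \<in> Lt k} \<and> card G = D" for Z G
  have exG: "\<exists>G. PG Z G" if Z: "Z \<in> Lt k" for Z
  proof -
    have "D \<le> card {W \<in> Hv k. sd W Z \<in> Lt k}" using Fam2[OF k2 Z] unfolding D_def .
    then obtain G where "G \<subseteq> {W \<in> Hv k. sd W Z \<in> Lt k}" "card G = D"
      by (rule obtain_subset_with_card_n)
    then show ?thesis unfolding PG_def by blast
  qed
  define GZ where "GZ Z = (SOME G. PG Z G)" for Z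
  have GZ: "PG Z (GZ Z)" if "Z \<in> Lt k" for Z
    unfolding GZ_def using someI_ex[OF exG[OF that]] .
  define S where "S = Hv k"
  define N where "N = {1..n}"
  define Func where "Func = PiE S (\<lambda>_. N)"
  have fS: "finite S" unfolding S_def by (rule Hv_fin)
  have fN: "finite N" and cN: "card N = n" unfolding N_def by auto
  define E1 where "E1 Z i j = {f \<in> Func. \<forall>A\<in>AZ Z. \<not> (f A = i \<and> f (sd A Z) = j)}" for Z i j
  define E2 where "E2 Z j = {f \<in> Func. \<forall>W\<in>GZ Z. f W \<noteq> j}" for Z j
  define Bad where "Bad = (\<Union>Z\<in>Lt k. \<Union>i\<in>N. \<Union>j\<in>N. E1 Z i j) \<union> (\<Union>Z\<in>Lt k. \<Union>j\<in>N. E2 Z j)"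
  define s where "s = card S"
  define X1 where "X1 = (n*n - 1)^D * n^(s - 2*D)"
  define X2 where "X2 = (n - 1)^D * n^(s - D)"
  have cE1: "card (E1 Z i j) \<le> X1" if Z: "Z \<in> Lt k" and i: "i \<in> N" and j: "j \<in> N" for Z i j
  proof -
    have P: "AZ Z \<subseteq> Hv k" "\<forall>A\<in>AZ Z. sd A Z \<in> Hv k \<and> sd A Z \<notin> AZ Z" "card (AZ Z) = D"
      using AZ[OF Z] unfolding PA_def by auto
    have "card (E1 Z i j) \<le> (card N * card N - 1) ^ card (AZ Z) * card N ^ (card S - 2 * card (AZ Z))"
      unfolding E1_def Func_def
    proof (rule count_pairs[OF fS fN])
      show "AZ Z \<subseteq> S" using P unfolding S_def by simp
      show "(\<lambda>A. sd A Z) ` AZ Z \<subseteq> S" using P unfolding S_def by auto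
      show "\<And>a. a \<in> AZ Z \<Longrightarrow> sd (sd a Z) Z = a" by (rule sd_cancel2)
      show "AZ Z \<inter> (\<lambda>A. sd A Z) ` AZ Z = {}" using P by auto
    qed (use i j in auto)
    then show ?thesis unfolding X1_def s_def cN P(3) .
  qed
  have cE2: "card (E2 Z j) = X2" if Z: "Z \<in> Lt k" and j: "j \<in> N" for Z j
  proof -
    have P: "GZ Z \<subseteq> S" "card (GZ Z) = D" using GZ[OF Z] unfolding PG_def S_def by auto
    show ?thesis unfolding E2_def Func_def X2_def s_def using count_avoid[OF fS P(1) fN j] cN P(2) by simp
  qed
  have fL: "finite (Lt k)"
  proof -
    have "Lt k \<subseteq> Pow {..<3*k+1}" unfolding Lt_def by auto
    then show ?thesis using finite_subset by blast
  qed
  define ll where "ll = card (Lt k)"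
  have cB1: "card (\<Union>Z\<in>Lt k. \<Union>i\<in>N. \<Union>j\<in>N. E1 Z i j) \<le> ll * (n * (n * X1))"
  proof -
    have "card (\<Union>Z\<in>Lt k. \<Union>i\<in>N. \<Union>j\<in>N. E1 Z i j) \<le> (\<Sum>Z\<in>Lt k. card (\<Union>i\<in>N. \<Union>j\<in>N. E1 Z i j))"
      by (rule card_UN_le[OF fL])
    also have "\<dots> \<le> (\<Sum>Z\<in>Lt k. n * (n * X1))"
    proof (rule sum_mono)
      fix Z assume Z: "Z \<in> Lt k"
      have "card (\<Union>i\<in>N. \<Union>j\<in>N. E1 Z i j) \<le> (\<Sum>i\<in>N. card (\<Union>j\<in>N. E1 Z i j))"
        by (rule card_UN_le[OF fN])
      also have "\<dots> \<le> (\<Sum>i\<in>N. n * X1)"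
      proof (rule sum_mono)
        fix i assume i: "i \<in> N"
        have "card (\<Union>j\<in>N. E1 Z i j) \<le> (\<Sum>j\<in>N. card (E1 Z i j))" by (rule card_UN_le[OF fN])
        also have "\<dots> \<le> (\<Sum>j\<in>N. X1)" using cE1[OF Z i] by (intro sum_mono) auto
        finally show "card (\<Union>j\<in>N. E1 Z i j) \<le> n * X1" using cN by simp
      qed
      finally show "card (\<Union>i\<in>N. \<Union>j\<in>N. E1 Z i j) \<le> n * (n * X1)" using cN by simp
    qed
    finally show ?thesis unfolding ll_def by simp
  qed
  have cB2: "card (\<Union>Z\<in>Lt k. \<Union>j\<in>N. E2 Z j) \<le> ll * (n * X2)"
  proof -
    have "card (\<Union>Z\<in>Lt k. \<Union>j\<in>N. E2 Z j) \<le> (\<Sum>Z\<in>Lt k. card (\<Union>j\<in>N. E2 Z j))"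
      by (rule card_UN_le[OF fL])
    also have "\<dots> \<le> (\<Sum>Z\<in>Lt k. n * X2)"
    proof (rule sum_mono)
      fix Z assume Z: "Z \<in> Lt k"
      have "card (\<Union>j\<in>N. E2 Z j) \<le> (\<Sum>j\<in>N. card (E2 Z j))" by (rule card_UN_le[OF fN])
      also have "\<dots> \<le> (\<Sum>j\<in>N. X2)" using cE2[OF Z] by (intro sum_mono) auto
      finally show "card (\<Union>j\<in>N. E2 Z j) \<le> n * X2" using cN by simp
    qed
    finally show ?thesis unfolding ll_def by simp
  qed
  have cBad: "card Bad \<le> ll * (n * (n * X1)) + ll * (n * X2)"
    unfolding Bad_def using card_Un_le cB1 cB2 by (meson add_mono order_trans)
  have Z0: "{0} \<in> Lt k" unfolding Lt_def using k by auto
  have s2D: "2 * D \<le> s"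
  proof -
    have P: "AZ {0} \<subseteq> Hv k" "\<forall>A\<in>AZ {0}. sd A {0} \<in> Hv k \<and> sd A {0} \<notin> AZ {0}" "card (AZ {0}) = D"
      using AZ[OF Z0] unfolding PA_def by auto
    have fA: "finite (AZ {0})" using P(1) Hv_fin finite_subset by blast
    have inj: "inj_on (\<lambda>A. sd A {0}) (AZ {0})" by (rule inj_onI) (metis sd_cancel2)
    have d: "AZ {0} \<inter> (\<lambda>A. sd A {0}) ` AZ {0} = {}" using P(2) by auto
    have "card (AZ {0} \<union> (\<lambda>A. sd A {0}) ` AZ {0}) = 2 * D"
      using card_Un_disjoint[OF fA finite_imageI[OF fA] d] card_image[OF inj] P(3) by simp
    moreover have "AZ {0} \<union> (\<lambda>A. sd A {0}) ` AZ {0} \<subseteq> S" using P unfolding S_def by auto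
    ultimately show ?thesis unfolding s_def using card_mono[OF fS] by metis
  qed
  have DS: "D \<le> s" using s2D by simp
  have cF: "card Func = n ^ s" unfolding Func_def s_def using card_PiE[OF fS, of "\<lambda>_. N"] cN by simp
  have lt: "ll * (n * (n * X1)) + ll * (n * X2) < n ^ s"
  proof -
    have ll: "ll \<le> 2^(3*k+1)" unfolding ll_def by (rule Lt_card_le)
    have core: "real ll * real n ^ 2 * (1 - 1 / real n ^ 2) ^ D + real ll * real n * (1 - 1 / real n) ^ D < 1"
      using ineq_core[OF k n ll] unfolding D_def .
    have ns: "real n ^ s > 0" using n by simp
    have "real (ll * (n * (n * X1)) + ll * (n * X2))
        = real n ^ s * (real ll * real n ^ 2 * (1 - 1 / real n ^ 2) ^ D + real ll * real n * (1 - 1 / real n) ^ D)"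
      using real_X1[OF n(1) s2D] real_X2[OF n(1) DS] unfolding X1_def X2_def
      by (simp add: algebra_simps power2_eq_square)
    also have "\<dots> < real n ^ s * 1" using core ns by (intro mult_strict_left_mono) auto
    finally have "real (ll * (n * (n * X1)) + ll * (n * X2)) < real (n ^ s)" by simp
    then show ?thesis by (simp only: of_nat_less_iff)
  qed
  have cl: "card Bad < card Func" using cBad lt cF by linarith
  have BF: "Bad \<subseteq> Func" unfolding Bad_def E1_def E2_def by auto
  have fF: "finite Func" unfolding Func_def using fS fN by (intro finite_PiE) auto
  have "\<not> Func \<subseteq> Bad"
  proof
    assume "Func \<subseteq> Bad"
    then have "card Func \<le> card Bad" using BF fF by (intro card_mono) (auto intro: finite_subset)
    then show False using cl by simp
  qed
  then obtain f where f: "f \<in> Func" "f \<notin> Bad" by blast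
  have fR: "\<forall>A. A \<in> Hv k \<longrightarrow> f A \<in> {1..n}" using f(1) unfolding Func_def S_def N_def by auto
  have P1: "\<forall>Z i j. Z \<in> Lt k \<longrightarrow> i \<in> {1..n} \<longrightarrow> j \<in> {1..n} \<longrightarrow>
          (\<exists>A. A \<in> Hv k \<and> sd A Z \<in> Hv k \<and> f A = i \<and> f (sd A Z) = j)"
  proof (intro allI impI)
    fix Z i j assume Z: "Z \<in> Lt k" and i: "i \<in> {1..n}" and j: "j \<in> {1..n}"
    have "f \<notin> E1 Z i j" using f(2) Z i j unfolding Bad_def N_def by blast
    then obtain A where A: "A \<in> AZ Z" "f A = i" "f (sd A Z) = j" using f(1) unfolding E1_def by blast
    have "A \<in> Hv k" "sd A Z \<in> Hv k" using AZ[OF Z] A(1) unfolding PA_def by auto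
    then show "\<exists>A. A \<in> Hv k \<and> sd A Z \<in> Hv k \<and> f A = i \<and> f (sd A Z) = j" using A by blast
  qed
  have P2: "\<forall>Z j. Z \<in> Lt k \<longrightarrow> j \<in> {1..n} \<longrightarrow> (\<exists>W. W \<in> Hv k \<and> f W = j \<and> sd W Z \<in> Lt k)"
  proof (intro allI impI)
    fix Z j assume Z: "Z \<in> Lt k" and j: "j \<in> {1..n}"
    have "f \<notin> E2 Z j" using f(2) Z j unfolding Bad_def N_def by blast
    then obtain W where W: "W \<in> GZ Z" "f W = j" using f(1) unfolding E2_def by blast
    have "W \<in> Hv k" "sd W Z \<in> Lt k" using GZ[OF Z] W(1) unfolding PG_def by auto
    then show "\<exists>W. W \<in> Hv k \<and> f W = j \<and> sd W Z \<in> Lt k" using W by blast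
  qed
  show ?thesis using fR P1 P2 by blast
qed

lemma rep_k:
  assumes k: "14 \<le> k" and n: "1 \<le> n" "n \<le> k"
  shows "representable_over n (Z2_pow (3*k+1))"
proof -
  obtain f where fR: "\<forall>A. A \<in> Hv k \<longrightarrow> f A \<in> {1..n}"
    and P1: "\<forall>Z i j. Z \<in> Lt k \<longrightarrow> i \<in> {1..n} \<longrightarrow> j \<in> {1..n} \<longrightarrow>
          (\<exists>A. A \<in> Hv k \<and> sd A Z \<in> Hv k \<and> f A = i \<and> f (sd A Z) = j)"
    and P2: "\<forall>Z j. Z \<in> Lt k \<longrightarrow> j \<in> {1..n} \<longrightarrow> (\<exists>W. W \<in> Hv k \<and> f W = j \<and> sd W Z \<in> Lt k)"
    using exists_coloring[OF k n] by blast
  show ?thesis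
    by (rule main_rep[of k n f]) (use k n fR P1 P2 in auto)
qed

theorem mainTheorem2:
  shows "(\<forall>n::nat. n \<ge> 2 \<longrightarrow>
            (\<exists>K::nat. \<forall>k\<ge>K. representable_over n (Z2_pow (3 * k + 1)))) \<and>
         (\<forall>n::nat. n \<ge> 14 \<longrightarrow> representable_over n (Z2_pow (3 * n + 1)))"
proof (intro conjI allI impI)
  fix n :: nat assume n: "n \<ge> 2"
  show "\<exists>K::nat. \<forall>k\<ge>K. representable_over n (Z2_pow (3 * k + 1))"
  proof (intro exI allI impI)
    fix k assume "max n 14 \<le> k"
    then show "representable_over n (Z2_pow (3 * k + 1))" using rep_k[of k n] n by simp
  qed
next
  fix n :: nat assume n: "n \<ge> 14"
  show "representable_over n (Z2_pow (3 * n + 1))" using rep_k[of n n] n by simp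
qed


end
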